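(* Let $R$ be a commutative ring and $(A,d)$ a differential graded $R$-algebra, and suppose that the left dg-module $(A,d)$ over $(A,d)$ is a finite direct sum of dg-simple left dg-modules over $(A,d)$. Then for any dg-simple left dg-module $(S,\delta)$ over $(A,d)$ there is an integer $n\in\mathbb{Z}$ such that $(S,\delta)[n]$ is (isomorphic to) a direct summand of $(A,d)$ as left dg-module.
   Context: A differential graded (dg) $R$-algebra $(A,d)$ is a $\mathbb{Z}$-graded $R$-algebra $A$ with an $R$-linear degree-$1$ endomorphism $d$, $d^2=0$, $d(ab)=d(a)b+(-1)^{|a|}a\,d(b)$ for homogeneous $a,b$. A left dg-module $(M,\delta)$ is a graded left $A$-module with an $R$-linear degree-$1$ map $\delta$, $\delta^2=0$, $\delta(am)=d(a)m+(-1)^{|a|}a\,\delta(m)$. A dg-submodule is a graded submodule stable under $\delta$; morphisms are degree-$0$ $A$-linear maps commuting with differentials. $(S,\delta)$ is dg-simple if its only dg-submodules are $0$ and $S$ (and $S\neq 0$). For $n\in\mathbb{Z}$, $(M,\delta)[n]$ denotes the shifted dg-module, with degree-$k$ component $M^{k+n}$ (and the differential adjusted by the standard sign). *)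

theory Defs
  imports Main
begin

text \<open>
A graded R-module (R a commutative ring, type class comm_ring_1) is represented by its
family of homogeneous components comp M k (k :: int), all living in an ambient type,
together with the addition, zero, negation, scalar multiplication and differential,
which are only ever used on homogeneous elements of a fixed degree.
\<close>

record ('r, 'a) gmod =
  comp  :: "int \<Rightarrow> 'a set"
  gadd  :: "'a \<Rightarrow> 'a \<Rightarrow> 'a"
  gzero :: "'a"
  gneg  :: "'a \<Rightarrow> 'a"
  gsmul :: "'r \<Rightarrow> 'a \<Rightarrow> 'a"
  gdiff :: "'a \<Rightarrow> 'a"

definition gsign :: "('r, 'a, 'z) gmod_scheme \<Rightarrow> int \<Rightarrow> 'a \<Rightarrow> 'a" where
  "gsign M i x = (if even i then x else gneg M x)"

definition graded_module :: "('r::comm_ring_1, 'a, 'z) gmod_scheme \<Rightarrow> bool" where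
  "graded_module M \<longleftrightarrow> (\<forall>k.
     gzero M \<in> comp M k \<and>
     (\<forall>x\<in>comp M k. \<forall>y\<in>comp M k. gadd M x y \<in> comp M k) \<and>
     (\<forall>x\<in>comp M k. gneg M x \<in> comp M k) \<and>
     (\<forall>r. \<forall>x\<in>comp M k. gsmul M r x \<in> comp M k) \<and>
     (\<forall>x\<in>comp M k. \<forall>y\<in>comp M k. \<forall>z\<in>comp M k.
        gadd M (gadd M x y) z = gadd M x (gadd M y z)) \<and>
     (\<forall>x\<in>comp M k. \<forall>y\<in>comp M k. gadd M x y = gadd M y x) \<and>
     (\<forall>x\<in>comp M k. gadd M (gzero M) x = x) \<and>
     (\<forall>x\<in>comp M k. gadd M (gneg M x) x = gzero M) \<and>
     (\<forall>r s. \<forall>x\<in>comp M k. gsmul M (r + s) x = gadd M (gsmul M r x) (gsmul M s x)) \<and>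
     (\<forall>r. \<forall>x\<in>comp M k. \<forall>y\<in>comp M k.
        gsmul M r (gadd M x y) = gadd M (gsmul M r x) (gsmul M r y)) \<and>
     (\<forall>r s. \<forall>x\<in>comp M k. gsmul M (r * s) x = gsmul M r (gsmul M s x)) \<and>
     (\<forall>x\<in>comp M k. gsmul M 1 x = x))"

definition dg_complex :: "('r::comm_ring_1, 'a, 'z) gmod_scheme \<Rightarrow> bool" where
  "dg_complex M \<longleftrightarrow> graded_module M \<and> (\<forall>k.
     (\<forall>x\<in>comp M k. gdiff M x \<in> comp M (k + 1)) \<and>
     (\<forall>x\<in>comp M k. \<forall>y\<in>comp M k. gdiff M (gadd M x y) = gadd M (gdiff M x) (gdiff M y)) \<and>
     (\<forall>r. \<forall>x\<in>comp M k. gdiff M (gsmul M r x) = gsmul M r (gdiff M x)) \<and>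
     (\<forall>x\<in>comp M k. gdiff M (gdiff M x) = gzero M))"

definition dg_algebra ::
  "('r::comm_ring_1, 'a) gmod \<Rightarrow> ('a \<Rightarrow> 'a \<Rightarrow> 'a) \<Rightarrow> 'a \<Rightarrow> bool" where
  "dg_algebra A mult one \<longleftrightarrow> dg_complex A \<and> one \<in> comp A 0 \<and>
   (\<forall>i j. \<forall>a\<in>comp A i. \<forall>b\<in>comp A j.
      mult a b \<in> comp A (i + j) \<and>
      (\<forall>a'\<in>comp A i. mult (gadd A a a') b = gadd A (mult a b) (mult a' b)) \<and>
      (\<forall>b'\<in>comp A j. mult a (gadd A b b') = gadd A (mult a b) (mult a b')) \<and>
      (\<forall>l. \<forall>c\<in>comp A l. mult (mult a b) c = mult a (mult b c)) \<and>
      (\<forall>r. gsmul A r (mult a b) = mult (gsmul A r a) b \<and>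
           gsmul A r (mult a b) = mult a (gsmul A r b)) \<and>
      gdiff A (mult a b) = gadd A (mult (gdiff A a) b) (gsign A i (mult a (gdiff A b)))) \<and>
   (\<forall>i. \<forall>a\<in>comp A i. mult one a = a \<and> mult a one = a)"

text \<open>left dg-module (M, delta) over (A, d); act i a m is the action of a homogeneous
  element a of degree i on m (the degree is passed explicitly so that sign twists are
  well defined)\<close>
definition dg_module ::
  "('r::comm_ring_1, 'a) gmod \<Rightarrow> ('a \<Rightarrow> 'a \<Rightarrow> 'a) \<Rightarrow> 'a \<Rightarrow>
   ('r, 'm) gmod \<Rightarrow> (int \<Rightarrow> 'a \<Rightarrow> 'm \<Rightarrow> 'm) \<Rightarrow> bool" where
  "dg_module A mult one M act \<longleftrightarrow> dg_complex M \<and>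
   (\<forall>i j. \<forall>a\<in>comp A i. \<forall>m\<in>comp M j.
      act i a m \<in> comp M (i + j) \<and>
      (\<forall>a'\<in>comp A i. act i (gadd A a a') m = gadd M (act i a m) (act i a' m)) \<and>
      (\<forall>m'\<in>comp M j. act i a (gadd M m m') = gadd M (act i a m) (act i a m')) \<and>
      (\<forall>l. \<forall>b\<in>comp A l. act (l + i) (mult b a) m = act l b (act i a m)) \<and>
      (\<forall>r. gsmul M r (act i a m) = act i (gsmul A r a) m \<and>
           gsmul M r (act i a m) = act i a (gsmul M r m)) \<and>
      gdiff M (act i a m) =
        gadd M (act (i + 1) (gdiff A a) m) (gsign M i (act i a (gdiff M m)))) \<and>
   (\<forall>j. \<forall>m\<in>comp M j. act 0 one m = m)"

definition dg_submodule ::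
  "('r::comm_ring_1, 'a) gmod \<Rightarrow> ('r, 'm) gmod \<Rightarrow> (int \<Rightarrow> 'a \<Rightarrow> 'm \<Rightarrow> 'm) \<Rightarrow>
   (int \<Rightarrow> 'm set) \<Rightarrow> bool" where
  "dg_submodule A M act N \<longleftrightarrow> (\<forall>k.
     N k \<subseteq> comp M k \<and> gzero M \<in> N k \<and>
     (\<forall>x\<in>N k. \<forall>y\<in>N k. gadd M x y \<in> N k) \<and>
     (\<forall>x\<in>N k. gneg M x \<in> N k) \<and>
     (\<forall>r. \<forall>x\<in>N k. gsmul M r x \<in> N k) \<and>
     (\<forall>i. \<forall>a\<in>comp A i. \<forall>x\<in>N k. act i a x \<in> N (i + k)) \<and>
     (\<forall>x\<in>N k. gdiff M x \<in> N (k + 1)))"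

definition dg_simple ::
  "('r::comm_ring_1, 'a) gmod \<Rightarrow> ('a \<Rightarrow> 'a \<Rightarrow> 'a) \<Rightarrow> 'a \<Rightarrow>
   ('r, 'm) gmod \<Rightarrow> (int \<Rightarrow> 'a \<Rightarrow> 'm \<Rightarrow> 'm) \<Rightarrow> bool" where
  "dg_simple A mult one S act \<longleftrightarrow> dg_module A mult one S act \<and>
     (\<exists>k. comp S k \<noteq> {gzero S}) \<and>
     (\<forall>N. dg_submodule A S act N \<longrightarrow>
        (\<forall>k. N k = {gzero S}) \<or> (\<forall>k. N k = comp S k))"

text \<open>Shift (M,delta)[n]: degree-k component is M^(k+n); standard (Koszul) signs:
  differential (-1)^n delta, action a .m = (-1)^(n |a|) a m\<close>
definition shift_mod :: "('r, 'm) gmod \<Rightarrow> int \<Rightarrow> ('r, 'm) gmod" where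
  "shift_mod M n = M\<lparr>comp := (\<lambda>k. comp M (k + n)), gdiff := (\<lambda>x. gsign M n (gdiff M x))\<rparr>"

definition shift_act :: "('r, 'm) gmod \<Rightarrow> (int \<Rightarrow> 'a \<Rightarrow> 'm \<Rightarrow> 'm) \<Rightarrow> int \<Rightarrow>
   (int \<Rightarrow> 'a \<Rightarrow> 'm \<Rightarrow> 'm)" where
  "shift_act M act n = (\<lambda>i a x. gsign M (n * i) (act i a x))"

definition sub_mod :: "('r, 'm) gmod \<Rightarrow> (int \<Rightarrow> 'm set) \<Rightarrow> ('r, 'm) gmod" where
  "sub_mod M N = M\<lparr>comp := N\<rparr>"

definition dg_iso ::
  "('r::comm_ring_1, 'a) gmod \<Rightarrow> ('r, 'm) gmod \<Rightarrow> (int \<Rightarrow> 'a \<Rightarrow> 'm \<Rightarrow> 'm) \<Rightarrow>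
   ('r, 'n) gmod \<Rightarrow> (int \<Rightarrow> 'a \<Rightarrow> 'n \<Rightarrow> 'n) \<Rightarrow> (int \<Rightarrow> 'm \<Rightarrow> 'n) \<Rightarrow> bool" where
  "dg_iso A M act M' act' f \<longleftrightarrow> (\<forall>k.
     bij_betw (f k) (comp M k) (comp M' k) \<and>
     (\<forall>x\<in>comp M k. \<forall>y\<in>comp M k. f k (gadd M x y) = gadd M' (f k x) (f k y)) \<and>
     (\<forall>r. \<forall>x\<in>comp M k. f k (gsmul M r x) = gsmul M' r (f k x)) \<and>
     (\<forall>i. \<forall>a\<in>comp A i. \<forall>x\<in>comp M k. f (i + k) (act i a x) = act' i a (f k x)) \<and>
     (\<forall>x\<in>comp M k. f (k + 1) (gdiff M x) = gdiff M' (f k x)))"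

definition reg_act :: "('a \<Rightarrow> 'a \<Rightarrow> 'a) \<Rightarrow> int \<Rightarrow> 'a \<Rightarrow> 'a \<Rightarrow> 'a" where
  "reg_act mult = (\<lambda>i a b. mult a b)"

definition gsum_list :: "('r, 'a) gmod \<Rightarrow> 'a list \<Rightarrow> 'a" where
  "gsum_list M xs = foldr (gadd M) xs (gzero M)"

definition finite_sum_of_dg_simples ::
  "('r::comm_ring_1, 'a) gmod \<Rightarrow> ('a \<Rightarrow> 'a \<Rightarrow> 'a) \<Rightarrow> 'a \<Rightarrow> bool" where
  "finite_sum_of_dg_simples A mult one \<longleftrightarrow>
    (\<exists>Ns :: (int \<Rightarrow> 'a set) list.
       (\<forall>N\<in>set Ns. dg_submodule A A (reg_act mult) N \<and>
                   dg_simple A mult one (sub_mod A N) (reg_act mult)) \<and>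
       (\<forall>k. \<forall>x\<in>comp A k. \<exists>!xs. length xs = length Ns \<and>
            (\<forall>j<length Ns. xs ! j \<in> (Ns ! j) k) \<and> x = gsum_list A xs))"

definition dg_direct_summand ::
  "('r::comm_ring_1, 'a) gmod \<Rightarrow> ('a \<Rightarrow> 'a \<Rightarrow> 'a) \<Rightarrow> (int \<Rightarrow> 'a set) \<Rightarrow> bool" where
  "dg_direct_summand A mult N \<longleftrightarrow> dg_submodule A A (reg_act mult) N \<and>
    (\<exists>N'. dg_submodule A A (reg_act mult) N' \<and>
       (\<forall>k. N k \<inter> N' k = {gzero A} \<and>
            (\<forall>x\<in>comp A k. \<exists>y\<in>N k. \<exists>z\<in>N' k. x = gadd A y z)))"

end

theory Submission
  imports Defs
begin


lemma gm_zero: "graded_module M \<Longrightarrow> gzero M \<in> comp M k"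
  unfolding graded_module_def by (drule spec[of _ k]) (elim conjE; blast)
lemma gm_add: "graded_module M \<Longrightarrow> x \<in> comp M k \<Longrightarrow> y \<in> comp M k \<Longrightarrow> gadd M x y \<in> comp M k"
  unfolding graded_module_def by (drule spec[of _ k]) (elim conjE; blast)
lemma gm_neg: "graded_module M \<Longrightarrow> x \<in> comp M k \<Longrightarrow> gneg M x \<in> comp M k"
  unfolding graded_module_def by (drule spec[of _ k]) (elim conjE; blast)
lemma gm_smul: "graded_module M \<Longrightarrow> x \<in> comp M k \<Longrightarrow> gsmul M r x \<in> comp M k"
  unfolding graded_module_def by (drule spec[of _ k]) (elim conjE; blast)
lemma gm_assoc: "graded_module M \<Longrightarrow> x \<in> comp M k \<Longrightarrow> y \<in> comp M k \<Longrightarrow> z \<in> comp M k \<Longrightarrow>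
   gadd M (gadd M x y) z = gadd M x (gadd M y z)"
  unfolding graded_module_def by (drule spec[of _ k]) (elim conjE; blast)
lemma gm_comm: "graded_module M \<Longrightarrow> x \<in> comp M k \<Longrightarrow> y \<in> comp M k \<Longrightarrow> gadd M x y = gadd M y x"
  unfolding graded_module_def by (drule spec[of _ k]) (elim conjE; blast)
lemma gm_lzero: "graded_module M \<Longrightarrow> x \<in> comp M k \<Longrightarrow> gadd M (gzero M) x = x"
  unfolding graded_module_def by (drule spec[of _ k]) (elim conjE; blast)
lemma gm_lneg: "graded_module M \<Longrightarrow> x \<in> comp M k \<Longrightarrow> gadd M (gneg M x) x = gzero M"
  unfolding graded_module_def by (drule spec[of _ k]) (elim conjE; blast)
lemma gm_smul_add: "graded_module M \<Longrightarrow> x \<in> comp M k \<Longrightarrow> y \<in> comp M k \<Longrightarrow>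
   gsmul M r (gadd M x y) = gadd M (gsmul M r x) (gsmul M r y)"
  unfolding graded_module_def by (drule spec[of _ k]) (elim conjE; blast)

lemma gm_rzero: "graded_module M \<Longrightarrow> x \<in> comp M k \<Longrightarrow> gadd M x (gzero M) = x"
  using gm_comm[of M x k "gzero M"] gm_lzero[of M x k] gm_zero[of M k] by simp
lemma gm_rneg: "graded_module M \<Longrightarrow> x \<in> comp M k \<Longrightarrow> gadd M x (gneg M x) = gzero M"
  using gm_comm[of M x k "gneg M x"] gm_lneg[of M x k] gm_neg[of M x k] by simp

lemma gm_cancel:
  assumes M: "graded_module M" and x: "x \<in> comp M k" and y: "y \<in> comp M k" and z: "z \<in> comp M k"
    and e: "gadd M x y = gadd M x z"
  shows "y = z"
proof -
  have "y = gadd M (gadd M (gneg M x) x) y" using M y x by (simp add: gm_lneg gm_lzero)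
  also have "\<dots> = gadd M (gneg M x) (gadd M x y)" using M x y by (metis gm_assoc gm_neg)
  also have "\<dots> = gadd M (gneg M x) (gadd M x z)" using e by simp
  also have "\<dots> = gadd M (gadd M (gneg M x) x) z" using M x z by (metis gm_assoc gm_neg)
  also have "\<dots> = z" using M z x by (simp add: gm_lneg gm_lzero)
  finally show ?thesis .
qed

lemma gm_eq_neg:
  assumes M: "graded_module M" and a: "a \<in> comp M k" and b: "b \<in> comp M k"
    and e: "gadd M a b = gzero M"
  shows "a = gneg M b"
proof -
  have "a = gadd M a (gadd M b (gneg M b))" using M a b by (simp add: gm_rneg gm_rzero)
  also have "\<dots> = gadd M (gadd M a b) (gneg M b)" using M a b by (metis gm_assoc gm_neg)
  also have "\<dots> = gneg M b" using e gm_lzero[OF M gm_neg[OF M b]] by simp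
  finally show ?thesis .
qed

lemma gm_neg_neg: "graded_module M \<Longrightarrow> x \<in> comp M k \<Longrightarrow> gneg M (gneg M x) = x"
  using gm_eq_neg[of M x k "gneg M x"] gm_neg[of M x k] gm_rneg[of M x k] by simp

lemma gm_sub_zero:
  assumes M: "graded_module M" and x: "x \<in> comp M k" and y: "y \<in> comp M k"
    and e: "gadd M x (gneg M y) = gzero M"
  shows "x = y"
  using gm_eq_neg[OF M x gm_neg[OF M y] e] gm_neg_neg[OF M y] by simp

lemma gm_neg_zero: "graded_module M \<Longrightarrow> gneg M (gzero M) = gzero M"
  using gm_eq_neg[of M "gzero M" 0 "gzero M"] gm_zero[of M 0] gm_lzero[of M "gzero M" 0] by simp

lemma gm_swap4:
  assumes M: "graded_module M" and a: "a \<in> comp M k" and b: "b \<in> comp M k"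
    and c: "c \<in> comp M k" and d: "d \<in> comp M k"
  shows "gadd M (gadd M a b) (gadd M c d) = gadd M (gadd M a c) (gadd M b d)"
proof -
  have "gadd M (gadd M a b) (gadd M c d) = gadd M a (gadd M b (gadd M c d))"
    using M a b c d by (simp add: gm_assoc gm_add)
  also have "gadd M b (gadd M c d) = gadd M c (gadd M b d)"
  proof -
    have "gadd M b (gadd M c d) = gadd M (gadd M b c) d" using gm_assoc[OF M b c d] by simp
    also have "\<dots> = gadd M (gadd M c b) d" using gm_comm[OF M b c] by simp
    also have "\<dots> = gadd M c (gadd M b d)" using gm_assoc[OF M c b d] by simp
    finally show ?thesis .
  qed
  also have "gadd M a (gadd M c (gadd M b d)) = gadd M (gadd M a c) (gadd M b d)"
    using M a b c d by (simp add: gm_assoc gm_add)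
  finally show ?thesis .
qed

lemma gm_neg_add:
  assumes M: "graded_module M" and x: "x \<in> comp M k" and y: "y \<in> comp M k"
  shows "gneg M (gadd M x y) = gadd M (gneg M x) (gneg M y)"
proof -
  have "gadd M (gadd M (gneg M x) (gneg M y)) (gadd M x y) = gadd M (gadd M (gneg M x) x) (gadd M (gneg M y) y)"
    using gm_swap4[OF M gm_neg[OF M x] gm_neg[OF M y] x y] .
  also have "\<dots> = gzero M" using M x y by (simp add: gm_lneg gm_lzero gm_zero)
  finally show ?thesis using gm_eq_neg[OF M gm_add[OF M gm_neg[OF M x] gm_neg[OF M y]] gm_add[OF M x y]] by simp
qed

definition addmap where
  "addmap M k M' k' h \<longleftrightarrow> (\<forall>x\<in>comp M k. h x \<in> comp M' k') \<and>
     (\<forall>x\<in>comp M k. \<forall>y\<in>comp M k. h (gadd M x y) = gadd M' (h x) (h y))"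

lemma hom_zero:
  assumes M: "graded_module M" and M': "graded_module M'" and h: "addmap M k M' k' h"
  shows "h (gzero M) = gzero M'"
proof -
  have u: "h (gzero M) \<in> comp M' k'" using h M unfolding addmap_def by (simp add: gm_zero)
  have "gadd M' (h (gzero M)) (h (gzero M)) = h (gadd M (gzero M) (gzero M))"
    using h M unfolding addmap_def by (simp add: gm_zero)
  also have "\<dots> = h (gzero M)" using M by (simp add: gm_lzero gm_zero)
  also have "\<dots> = gadd M' (h (gzero M)) (gzero M')" using M' u by (simp add: gm_rzero)
  finally show ?thesis using gm_cancel[OF M' u u gm_zero[OF M']] by simp
qed

lemma hom_neg:
  assumes M: "graded_module M" and M': "graded_module M'" and h: "addmap M k M' k' h"
    and x: "x \<in> comp M k"
  shows "h (gneg M x) = gneg M' (h x)"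
proof -
  have "gadd M' (h (gneg M x)) (h x) = h (gadd M (gneg M x) x)"
    using h M x unfolding addmap_def by (simp add: gm_neg)
  also have "\<dots> = gzero M'" using M x hom_zero[OF M M' h] by (simp add: gm_lneg)
  finally show ?thesis using gm_eq_neg[OF M'] h x M unfolding addmap_def by (meson gm_neg)
qed

lemma gsign_in: "graded_module M \<Longrightarrow> x \<in> comp M k \<Longrightarrow> gsign M i x \<in> comp M k"
  by (simp add: gsign_def gm_neg)

lemma gsign_gsign: "graded_module M \<Longrightarrow> x \<in> comp M k \<Longrightarrow> gsign M i (gsign M j x) = gsign M (i + j) x"
  by (auto simp add: gsign_def gm_neg_neg)

lemma gsign_zero: "graded_module M \<Longrightarrow> gsign M i (gzero M) = gzero M"
  by (simp add: gsign_def gm_neg_zero)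

lemma gsign_add: "graded_module M \<Longrightarrow> x \<in> comp M k \<Longrightarrow> y \<in> comp M k \<Longrightarrow>
  gsign M i (gadd M x y) = gadd M (gsign M i x) (gsign M i y)"
  by (simp add: gsign_def gm_neg_add)

lemma gsign_hom:
  assumes M: "graded_module M" and M': "graded_module M'" and h: "addmap M k M' k' h"
    and x: "x \<in> comp M k"
  shows "h (gsign M i x) = gsign M' i (h x)"
  using hom_neg[OF M M' h x] by (simp add: gsign_def)

lemma gsign_inj: "graded_module M \<Longrightarrow> x \<in> comp M k \<Longrightarrow> y \<in> comp M k \<Longrightarrow>
   gsign M i x = gsign M i y \<Longrightarrow> x = y"
  by (metis gm_neg_neg gsign_def)

lemma gsum_Nil[simp]: "gsum_list M [] = gzero M"
  by (simp add: gsum_list_def)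
lemma gsum_Cons[simp]: "gsum_list M (x # xs) = gadd M x (gsum_list M xs)"
  by (simp add: gsum_list_def)

lemma gsum_in: "graded_module M \<Longrightarrow> set xs \<subseteq> comp M k \<Longrightarrow> gsum_list M xs \<in> comp M k"
  by (induction xs) (auto simp: gm_zero gm_add)

lemma gsum_hom:
  assumes M: "graded_module M" and M': "graded_module M'" and h: "addmap M k M' k' h"
  shows "set xs \<subseteq> comp M k \<Longrightarrow> h (gsum_list M xs) = gsum_list M' (map h xs)"
proof (induction xs)
  case Nil then show ?case using hom_zero[OF M M' h] by simp
next
  case (Cons x xs)
  have x: "x \<in> comp M k" and xs: "set xs \<subseteq> comp M k" using Cons.prems by auto
  have "h (gsum_list M (x # xs)) = gadd M' (h x) (h (gsum_list M xs))"
    using h x gsum_in[OF M xs] unfolding addmap_def by simp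
  then show ?case using Cons.IH[OF xs] by simp
qed

lemma gsum_zeros: "graded_module M \<Longrightarrow> \<forall>x\<in>set xs. x = gzero M \<Longrightarrow> gsum_list M xs = gzero M"
  by (induction xs) (auto simp: gm_lzero gm_zero)

lemma gsum_map2:
  assumes M: "graded_module M"
  shows "length xs = length ys \<Longrightarrow> set xs \<subseteq> comp M k \<Longrightarrow> set ys \<subseteq> comp M k \<Longrightarrow>
    gsum_list M (map2 (gadd M) xs ys) = gadd M (gsum_list M xs) (gsum_list M ys)"
proof (induction xs ys rule: list_induct2)
  case Nil then show ?case using M by (simp add: gm_lzero gm_zero)
next
  case (Cons x xs y ys)
  have x: "x \<in> comp M k" and xs: "set xs \<subseteq> comp M k" using Cons.prems by auto
  have y: "y \<in> comp M k" and ys: "set ys \<subseteq> comp M k" using Cons.prems by auto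
  have "gsum_list M (map2 (gadd M) (x # xs) (y # ys)) =
     gadd M (gadd M x y) (gadd M (gsum_list M xs) (gsum_list M ys))"
    using Cons.IH[OF xs ys] by simp
  also have "\<dots> = gadd M (gadd M x (gsum_list M xs)) (gadd M y (gsum_list M ys))"
    using gm_swap4[OF M x y gsum_in[OF M xs] gsum_in[OF M ys]] .
  finally show ?case by simp
qed

lemma gsum_update:
  assumes M: "graded_module M"
  shows "j < length xs \<Longrightarrow> set xs \<subseteq> comp M k \<Longrightarrow>
    gsum_list M xs = gadd M (xs ! j) (gsum_list M (xs[j := gzero M]))"
proof (induction xs arbitrary: j)
  case Nil then show ?case by simp
next
  case (Cons x xs)
  show ?case
  proof (cases j)
    case 0
    have xs: "set xs \<subseteq> comp M k" using Cons.prems by auto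
    show ?thesis using 0 gm_lzero[OF M gsum_in[OF M xs]] by simp
  next
    case (Suc j')
    then have j': "j' < length xs" using Cons.prems by simp
    have xs: "set xs \<subseteq> comp M k" and x: "x \<in> comp M k" using Cons.prems by auto
    have xj: "xs ! j' \<in> comp M k" using xs j' by auto
    have "set (xs[j' := gzero M]) \<subseteq> comp M k"
      using xs gm_zero[OF M] by (simp add: set_update_subsetI)
    then have g: "gsum_list M (xs[j' := gzero M]) \<in> comp M k"
      using gsum_in[OF M] by blast
    have "gsum_list M (x # xs) = gadd M x (gadd M (xs ! j') (gsum_list M (xs[j' := gzero M])))"
      using Cons.IH[OF j' xs] by simp
    also have "\<dots> = gadd M (xs ! j') (gadd M x (gsum_list M (xs[j' := gzero M])))"
      using gm_assoc[OF M x xj g] gm_assoc[OF M xj x g] gm_comm[OF M x xj] by simp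
    finally show ?thesis using Suc by simp
  qed
qed


lemma dgc_gm: "dg_complex M \<Longrightarrow> graded_module M"
  by (simp add: dg_complex_def)
lemma dgc_D: "dg_complex M \<Longrightarrow>
     (\<forall>x\<in>comp M k. gdiff M x \<in> comp M (k + 1)) \<and>
     (\<forall>x\<in>comp M k. \<forall>y\<in>comp M k. gdiff M (gadd M x y) = gadd M (gdiff M x) (gdiff M y)) \<and>
     (\<forall>r. \<forall>x\<in>comp M k. gdiff M (gsmul M r x) = gsmul M r (gdiff M x)) \<and>
     (\<forall>x\<in>comp M k. gdiff M (gdiff M x) = gzero M)"
  unfolding dg_complex_def by (elim conjE, erule allE[of _ k])
lemma dgc_diff_in: "dg_complex M \<Longrightarrow> x \<in> comp M k \<Longrightarrow> gdiff M x \<in> comp M (k + 1)"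
  using dgc_D[of M k] by blast
lemma dgc_dd: "dg_complex M \<Longrightarrow> x \<in> comp M k \<Longrightarrow> gdiff M (gdiff M x) = gzero M"
  using dgc_D[of M k] by blast
lemma dgc_addmap: "dg_complex M \<Longrightarrow> addmap M k M (k + 1) (gdiff M)"
  using dgc_D[of M k] unfolding addmap_def by blast

lemma gm_smul_addmap: "graded_module M \<Longrightarrow> addmap M k M k (gsmul M r)"
  unfolding addmap_def by (simp add: gm_smul gm_smul_add)
lemma gm_neg_addmap: "graded_module M \<Longrightarrow> addmap M k M k (gneg M)"
  unfolding addmap_def by (simp add: gm_neg gm_neg_add)

lemma alg_dgc: "dg_algebra A mult one \<Longrightarrow> dg_complex A"
  by (simp add: dg_algebra_def)
lemma alg_one: "dg_algebra A mult one \<Longrightarrow> one \<in> comp A 0"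
  by (simp add: dg_algebra_def)
lemma alg_D: "dg_algebra A mult one \<Longrightarrow> a \<in> comp A i \<Longrightarrow> b \<in> comp A j \<Longrightarrow>
      mult a b \<in> comp A (i + j) \<and>
      (\<forall>a'\<in>comp A i. mult (gadd A a a') b = gadd A (mult a b) (mult a' b)) \<and>
      (\<forall>b'\<in>comp A j. mult a (gadd A b b') = gadd A (mult a b) (mult a b')) \<and>
      (\<forall>l. \<forall>c\<in>comp A l. mult (mult a b) c = mult a (mult b c)) \<and>
      (\<forall>r. gsmul A r (mult a b) = mult (gsmul A r a) b \<and>
           gsmul A r (mult a b) = mult a (gsmul A r b)) \<and>
      gdiff A (mult a b) = gadd A (mult (gdiff A a) b) (gsign A i (mult a (gdiff A b)))"
  unfolding dg_algebra_def by blast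
lemma alg_mult_in: "dg_algebra A mult one \<Longrightarrow> a \<in> comp A i \<Longrightarrow> b \<in> comp A j \<Longrightarrow> mult a b \<in> comp A (i + j)"
  using alg_D[of A mult one a i b j] by blast
lemma alg_addmap: "dg_algebra A mult one \<Longrightarrow> a \<in> comp A i \<Longrightarrow> addmap A j A (i + j) (mult a)"
  unfolding addmap_def using alg_D[of A mult one a i _ j] by blast

lemma mod_D: "dg_module A mult one M act \<Longrightarrow> a \<in> comp A i \<Longrightarrow> m \<in> comp M j \<Longrightarrow>
      act i a m \<in> comp M (i + j) \<and>
      (\<forall>a'\<in>comp A i. act i (gadd A a a') m = gadd M (act i a m) (act i a' m)) \<and>
      (\<forall>m'\<in>comp M j. act i a (gadd M m m') = gadd M (act i a m) (act i a m')) \<and>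
      (\<forall>l. \<forall>b\<in>comp A l. act (l + i) (mult b a) m = act l b (act i a m)) \<and>
      (\<forall>r. gsmul M r (act i a m) = act i (gsmul A r a) m \<and>
           gsmul M r (act i a m) = act i a (gsmul M r m)) \<and>
      gdiff M (act i a m) =
        gadd M (act (i + 1) (gdiff A a) m) (gsign M i (act i a (gdiff M m)))"
  unfolding dg_module_def by blast
lemma mod_dgc: "dg_module A mult one M act \<Longrightarrow> dg_complex M"
  by (simp add: dg_module_def)
lemma mod_one: "dg_module A mult one M act \<Longrightarrow> m \<in> comp M j \<Longrightarrow> act 0 one m = m"
  unfolding dg_module_def by blast
lemma mod_act_in: "dg_module A mult one M act \<Longrightarrow> a \<in> comp A i \<Longrightarrow> m \<in> comp M j \<Longrightarrow> act i a m \<in> comp M (i + j)"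
  using mod_D[of A mult one M act a i m j] by blast
lemma mod_addmap_a: "dg_module A mult one M act \<Longrightarrow> m \<in> comp M j \<Longrightarrow> addmap A i M (i + j) (\<lambda>a. act i a m)"
  unfolding addmap_def using mod_D[of A mult one M act _ i m j] by blast
lemma mod_addmap_m: "dg_module A mult one M act \<Longrightarrow> a \<in> comp A i \<Longrightarrow> addmap M j M (i + j) (act i a)"
  unfolding addmap_def using mod_D[of A mult one M act a i _ j] by blast
lemma mod_assoc: "dg_module A mult one M act \<Longrightarrow> a \<in> comp A i \<Longrightarrow> m \<in> comp M j \<Longrightarrow> b \<in> comp A l \<Longrightarrow>
   act (l + i) (mult b a) m = act l b (act i a m)"
  using mod_D[of A mult one M act a i m j] by blast
lemma mod_smul: "dg_module A mult one M act \<Longrightarrow> a \<in> comp A i \<Longrightarrow> m \<in> comp M j \<Longrightarrow>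
   gsmul M r (act i a m) = act i (gsmul A r a) m"
  using mod_D[of A mult one M act a i m j] by blast
lemma mod_diff: "dg_module A mult one M act \<Longrightarrow> a \<in> comp A i \<Longrightarrow> m \<in> comp M j \<Longrightarrow>
   gdiff M (act i a m) = gadd M (act (i + 1) (gdiff A a) m) (gsign M i (act i a (gdiff M m)))"
  using mod_D[of A mult one M act a i m j] by blast

lemma sub_D: "dg_submodule A M act N \<Longrightarrow>
     N k \<subseteq> comp M k \<and> gzero M \<in> N k \<and>
     (\<forall>x\<in>N k. \<forall>y\<in>N k. gadd M x y \<in> N k) \<and>
     (\<forall>x\<in>N k. gneg M x \<in> N k) \<and>
     (\<forall>r. \<forall>x\<in>N k. gsmul M r x \<in> N k) \<and>
     (\<forall>i. \<forall>a\<in>comp A i. \<forall>x\<in>N k. act i a x \<in> N (i + k)) \<and>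
     (\<forall>x\<in>N k. gdiff M x \<in> N (k + 1))"
  unfolding dg_submodule_def by (erule allE[of _ k])

lemma addmap_in: "addmap M k M' k' h \<Longrightarrow> x \<in> comp M k \<Longrightarrow> h x \<in> comp M' k'"
  unfolding addmap_def by blast
lemma addmap_add: "addmap M k M' k' h \<Longrightarrow> x \<in> comp M k \<Longrightarrow> y \<in> comp M k \<Longrightarrow>
   h (gadd M x y) = gadd M' (h x) (h y)"
  unfolding addmap_def by blast


lemma reg_act_simp[simp]: "reg_act mult i a b = mult a b"
  by (simp add: reg_act_def)

lemma cycle_exists:
  assumes "dg_simple A mult one S act"
  shows "\<exists>m z. z \<in> comp S m \<and> z \<noteq> gzero S \<and> gdiff S z = gzero S"
proof -
  have Sm: "dg_module A mult one S act" using assms by (simp add: dg_simple_def)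
  have C: "dg_complex S" using mod_dgc[OF Sm] .
  have G: "graded_module S" using dgc_gm[OF C] .
  obtain k where "comp S k \<noteq> {gzero S}" using assms by (auto simp: dg_simple_def)
  then obtain s where s: "s \<in> comp S k" "s \<noteq> gzero S" using gm_zero[OF G, of k] by blast
  show ?thesis
  proof (cases "gdiff S s = gzero S")
    case True then show ?thesis using s by blast
  next
    case False then show ?thesis using dgc_diff_in[OF C s(1)] dgc_dd[OF C s(1)] by blast
  qed
qed

lemma J_sub_k:
  assumes Al: "dg_algebra A mult one" and Sm: "dg_module A mult one S act"
    and N: "dg_submodule A A (reg_act mult) N" and z: "z \<in> comp S m" and dz: "gdiff S z = gzero S"
  defines "J \<equiv> (\<lambda>k. (\<lambda>b. act (k - m) b z) ` N (k - m))"
  shows "J k \<subseteq> comp S k \<and> gzero S \<in> J k \<and>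
     (\<forall>x\<in>J k. \<forall>y\<in>J k. gadd S x y \<in> J k) \<and>
     (\<forall>x\<in>J k. gneg S x \<in> J k) \<and>
     (\<forall>r. \<forall>x\<in>J k. gsmul S r x \<in> J k) \<and>
     (\<forall>i. \<forall>a\<in>comp A i. \<forall>x\<in>J k. act i a x \<in> J (i + k)) \<and>
     (\<forall>x\<in>J k. gdiff S x \<in> J (k + 1))"
proof -
  have GA: "graded_module A" using dgc_gm[OF alg_dgc[OF Al]] .
  have CS: "dg_complex S" using mod_dgc[OF Sm] .
  have GS: "graded_module S" using dgc_gm[OF CS] .
  have NA: "\<And>k'. N k' \<subseteq> comp A k'" using sub_D[OF N] by blast
  have km: "k - m + m = k" by simp
  define h where "h = (\<lambda>b. act (k - m) b z)"
  have Jk: "J k = h ` N (k - m)" by (simp add: J_def h_def)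
  have hm: "addmap A (k - m) S k h"
    using mod_addmap_a[OF Sm z, of "k - m", unfolded km] by (simp add: h_def)
  have hin: "\<And>b. b \<in> N (k - m) \<Longrightarrow> h b \<in> comp S k"
    using addmap_in[OF hm] NA by blast
  have hadd: "\<And>b b'. b \<in> N (k - m) \<Longrightarrow> b' \<in> N (k - m) \<Longrightarrow> gadd S (h b) (h b') = h (gadd A b b')"
  proof -
    fix b b' assume "b \<in> N (k - m)" "b' \<in> N (k - m)"
    then have "b \<in> comp A (k - m)" "b' \<in> comp A (k - m)" using NA by blast+
    then show "gadd S (h b) (h b') = h (gadd A b b')" using addmap_add[OF hm] by simp
  qed
  have Nadd: "\<And>b b'. b \<in> N (k - m) \<Longrightarrow> b' \<in> N (k - m) \<Longrightarrow> gadd A b b' \<in> N (k - m)"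
    using sub_D[OF N, of "k - m"] by blast
  have Nneg: "\<And>b. b \<in> N (k - m) \<Longrightarrow> gneg A b \<in> N (k - m)"
    using sub_D[OF N, of "k - m"] by blast
  have Nsmul: "\<And>b r. b \<in> N (k - m) \<Longrightarrow> gsmul A r b \<in> N (k - m)"
    using sub_D[OF N, of "k - m"] by blast
  have Nzero: "gzero A \<in> N (k - m)"
    using sub_D[OF N, of "k - m"] by blast
  have Nact: "\<And>b i a. b \<in> N (k - m) \<Longrightarrow> a \<in> comp A i \<Longrightarrow> mult a b \<in> N (i + (k - m))"
    using sub_D[OF N, of "k - m"] by simp
  have Ndiff: "\<And>b. b \<in> N (k - m) \<Longrightarrow> gdiff A b \<in> N (k - m + 1)"
    using sub_D[OF N, of "k - m"] by blast
  have JkE: "\<And>x. x \<in> J k \<Longrightarrow> \<exists>b\<in>N (k - m). x = h b" by (simp only: Jk image_iff)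
  have JkI: "\<And>b. b \<in> N (k - m) \<Longrightarrow> h b \<in> J k" unfolding Jk by (rule imageI)
  have c1: "J k \<subseteq> comp S k" using JkE hin by blast
  have c2: "gzero S \<in> J k"
  proof -
    have "h (gzero A) \<in> J k" using JkI[OF Nzero] .
    then show ?thesis using hom_zero[OF GA GS hm] by simp
  qed
  have c3: "\<forall>x\<in>J k. \<forall>y\<in>J k. gadd S x y \<in> J k"
  proof (intro ballI)
    fix x y assume "x \<in> J k" "y \<in> J k"
    then obtain b b' where b: "b \<in> N (k - m)" "x = h b" "b' \<in> N (k - m)" "y = h b'" using JkE by blast
    then have "gadd S x y = h (gadd A b b')" using hadd by simp
    then show "gadd S x y \<in> J k" using JkI[OF Nadd[OF b(1) b(3)]] by simp
  qed
  have c4: "\<forall>x\<in>J k. gneg S x \<in> J k"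
  proof
    fix x assume "x \<in> J k"
    then obtain b where b: "b \<in> N (k - m)" "x = h b" using JkE by blast
    have "b \<in> comp A (k - m)" using b NA by blast
    then have "gneg S x = h (gneg A b)" using hom_neg[OF GA GS hm] b by simp
    then show "gneg S x \<in> J k" using JkI[OF Nneg[OF b(1)]] by simp
  qed
  have c5: "\<forall>r. \<forall>x\<in>J k. gsmul S r x \<in> J k"
  proof (intro allI ballI)
    fix r x assume "x \<in> J k"
    then obtain b where b: "b \<in> N (k - m)" "x = h b" using JkE by blast
    have "b \<in> comp A (k - m)" using b NA by blast
    then have "gsmul S r x = h (gsmul A r b)" using mod_smul[OF Sm _ z] b unfolding h_def by simp
    then show "gsmul S r x \<in> J k" using JkI[OF Nsmul[OF b(1)]] by simp
  qed
  have c6: "\<forall>i. \<forall>a\<in>comp A i. \<forall>x\<in>J k. act i a x \<in> J (i + k)"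
  proof (intro allI ballI)
    fix i a x assume a: "a \<in> comp A i" and "x \<in> J k"
    then obtain b where b: "b \<in> N (k - m)" "x = h b" using JkE by blast
    have bA: "b \<in> comp A (k - m)" using b NA by blast
    have "act i a x = act (i + (k - m)) (mult a b) z"
      using mod_assoc[OF Sm bA z a] b unfolding h_def by simp
    moreover have "i + (k - m) = i + k - m" by simp
    ultimately have "act i a x = act (i + k - m) (mult a b) z" by simp
    moreover have "mult a b \<in> N (i + k - m)" using Nact[OF b(1) a] by (simp add: add_diff_eq)
    ultimately show "act i a x \<in> J (i + k)" unfolding J_def by blast
  qed
  have c7: "\<forall>x\<in>J k. gdiff S x \<in> J (k + 1)"
  proof
    fix x assume "x \<in> J k"
    then obtain b where b: "b \<in> N (k - m)" "x = h b" using JkE by blast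
    have bA: "b \<in> comp A (k - m)" using b NA by blast
    have z0: "act (k - m) b (gzero S) = gzero S"
      using hom_zero[OF GS GS mod_addmap_m[OF Sm bA, of m]] .
    have "gdiff S x = gadd S (act (k - m + 1) (gdiff A b) z) (gsign S (k - m) (act (k - m) b (gdiff S z)))"
      using mod_diff[OF Sm bA z] b unfolding h_def by simp
    also have "\<dots> = act (k - m + 1) (gdiff A b) z"
      using dz z0 gsign_zero[OF GS] gm_rzero[OF GS mod_act_in[OF Sm dgc_diff_in[OF alg_dgc[OF Al] bA] z]]
      by simp
    also have "\<dots> = act (k + 1 - m) (gdiff A b) z" by (simp add: algebra_simps)
    finally have "gdiff S x = act (k + 1 - m) (gdiff A b) z" .
    moreover have "gdiff A b \<in> N (k + 1 - m)" using Ndiff[OF b(1)] by (simp add: algebra_simps)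
    ultimately show "gdiff S x \<in> J (k + 1)" unfolding J_def by blast
  qed
  show ?thesis using c1 c2 c3 c4 c5 c6 c7 by (intro conjI)
qed

lemma J_sub:
  assumes Al: "dg_algebra A mult one" and Sm: "dg_module A mult one S act"
    and N: "dg_submodule A A (reg_act mult) N" and z: "z \<in> comp S m" and dz: "gdiff S z = gzero S"
  shows "dg_submodule A S act (\<lambda>k. (\<lambda>b. act (k - m) b z) ` N (k - m))"
  unfolding dg_submodule_def by (intro allI J_sub_k[OF assms])

lemma sub_mod_simps[simp]:
  "comp (sub_mod M N) = N" "gadd (sub_mod M N) = gadd M" "gzero (sub_mod M N) = gzero M"
  "gneg (sub_mod M N) = gneg M" "gsmul (sub_mod M N) = gsmul M" "gdiff (sub_mod M N) = gdiff M"
  by (simp_all add: sub_mod_def)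

lemma shift_mod_simps[simp]:
  "comp (shift_mod M n) k = comp M (k + n)" "gadd (shift_mod M n) = gadd M" "gzero (shift_mod M n) = gzero M"
  "gneg (shift_mod M n) = gneg M" "gsmul (shift_mod M n) = gsmul M"
  "gdiff (shift_mod M n) x = gsign M n (gdiff M x)"
  by (simp_all add: shift_mod_def)

lemma gsign_parity: "even i = even j \<Longrightarrow> gsign M i x = gsign M j x"
  by (simp add: gsign_def)

lemma gsign_even: "even i \<Longrightarrow> gsign M i x = x"
  by (simp add: gsign_def)

lemma K_sub:
  assumes Al: "dg_algebra A mult one" and Sm: "dg_module A mult one S act"
    and N: "dg_submodule A A (reg_act mult) N" and z: "z \<in> comp S m" and dz: "gdiff S z = gzero S"
  shows "dg_submodule A (sub_mod A N) (reg_act mult) (\<lambda>k. {b \<in> N k. act k b z = gzero S})"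
  unfolding dg_submodule_def sub_mod_simps reg_act_simp
proof (intro allI)
  fix k
  let ?K = "\<lambda>k. {b \<in> N k. act k b z = gzero S}"
  have CA: "dg_complex A" using alg_dgc[OF Al] .
  have GA: "graded_module A" using dgc_gm[OF CA] .
  have CS: "dg_complex S" using mod_dgc[OF Sm] .
  have GS: "graded_module S" using dgc_gm[OF CS] .
  have NA: "\<And>k'. N k' \<subseteq> comp A k'" using sub_D[OF N] by blast
  have ND: "N k \<subseteq> comp A k \<and> gzero A \<in> N k \<and>
     (\<forall>x\<in>N k. \<forall>y\<in>N k. gadd A x y \<in> N k) \<and>
     (\<forall>x\<in>N k. gneg A x \<in> N k) \<and>
     (\<forall>r. \<forall>x\<in>N k. gsmul A r x \<in> N k) \<and>
     (\<forall>i. \<forall>a\<in>comp A i. \<forall>x\<in>N k. mult a x \<in> N (i + k)) \<and>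
     (\<forall>x\<in>N k. gdiff A x \<in> N (k + 1))" using sub_D[OF N, of k] by simp
  have hm: "addmap A k S (k + m) (\<lambda>a. act k a z)" using mod_addmap_a[OF Sm z] .
  have c1: "?K k \<subseteq> N k" by blast
  have c2: "gzero A \<in> ?K k" using ND hom_zero[OF GA GS hm] by simp
  have c3: "\<forall>x\<in>?K k. \<forall>y\<in>?K k. gadd A x y \<in> ?K k"
  proof (intro ballI)
    fix x y assume x: "x \<in> ?K k" and y: "y \<in> ?K k"
    then have xA: "x \<in> comp A k" and yA: "y \<in> comp A k" using NA by blast+
    have "act k (gadd A x y) z = gadd S (act k x z) (act k y z)" using addmap_add[OF hm xA yA] .
    also have "\<dots> = gzero S" using x y gm_lzero[OF GS gm_zero[OF GS]] by simp
    finally show "gadd A x y \<in> ?K k" using ND x y by simp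
  qed
  have c4: "\<forall>x\<in>?K k. gneg A x \<in> ?K k"
  proof
    fix x assume x: "x \<in> ?K k"
    then have xA: "x \<in> comp A k" using NA by blast
    have "act k (gneg A x) z = gneg S (act k x z)" using hom_neg[OF GA GS hm xA] .
    also have "\<dots> = gzero S" using x gm_neg_zero[OF GS] by simp
    finally show "gneg A x \<in> ?K k" using ND x by simp
  qed
  have c5: "\<forall>r. \<forall>x\<in>?K k. gsmul A r x \<in> ?K k"
  proof (intro allI ballI)
    fix r x assume x: "x \<in> ?K k"
    then have xA: "x \<in> comp A k" using NA by blast
    have "act k (gsmul A r x) z = gsmul S r (act k x z)" using mod_smul[OF Sm xA z] by simp
    also have "\<dots> = gzero S" using x hom_zero[OF GS GS gm_smul_addmap[OF GS, of m r]] by simp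
    finally show "gsmul A r x \<in> ?K k" using ND x by simp
  qed
  have c6: "\<forall>i. \<forall>a\<in>comp A i. \<forall>x\<in>?K k. mult a x \<in> ?K (i + k)"
  proof (intro allI ballI)
    fix i a x assume a: "a \<in> comp A i" and x: "x \<in> ?K k"
    then have xA: "x \<in> comp A k" using NA by blast
    have "act (i + k) (mult a x) z = act i a (act k x z)" using mod_assoc[OF Sm xA z a] .
    also have "\<dots> = gzero S" using x hom_zero[OF GS GS mod_addmap_m[OF Sm a, of m]] by simp
    finally show "mult a x \<in> ?K (i + k)" using ND x a by simp
  qed
  have c7: "\<forall>x\<in>?K k. gdiff A x \<in> ?K (k + 1)"
  proof
    fix x assume x: "x \<in> ?K k"
    then have xA: "x \<in> comp A k" using NA by blast
    have z0: "act k x (gzero S) = gzero S"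
      using hom_zero[OF GS GS mod_addmap_m[OF Sm xA, of m]] .
    have "gzero S = gdiff S (act k x z)" using x hom_zero[OF GS GS dgc_addmap[OF CS, of "k + m"]] by simp
    also have "\<dots> = gadd S (act (k + 1) (gdiff A x) z) (gsign S k (act k x (gdiff S z)))"
      using mod_diff[OF Sm xA z] .
    also have "\<dots> = act (k + 1) (gdiff A x) z"
      using dz z0 gsign_zero[OF GS] gm_rzero[OF GS mod_act_in[OF Sm dgc_diff_in[OF CA xA] z]]
      by simp
    finally show "gdiff A x \<in> ?K (k + 1)" using ND x by simp
  qed
  show "?K k \<subseteq> N k \<and> gzero A \<in> ?K k \<and>
     (\<forall>x\<in>?K k. \<forall>y\<in>?K k. gadd A x y \<in> ?K k) \<and>
     (\<forall>x\<in>?K k. gneg A x \<in> ?K k) \<and>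
     (\<forall>r. \<forall>x\<in>?K k. gsmul A r x \<in> ?K k) \<and>
     (\<forall>i. \<forall>a\<in>comp A i. \<forall>x\<in>?K k. mult a x \<in> ?K (i + k)) \<and>
     (\<forall>x\<in>?K k. gdiff A x \<in> ?K (k + 1))"
    using c1 c2 c3 c4 c5 c6 c7 by (intro conjI)
qed

lemma iso_exists:
  assumes Al: "dg_algebra A mult one" and Ssim: "dg_simple A mult one S act"
    and N: "dg_submodule A A (reg_act mult) N"
    and Nsim: "dg_simple A mult one (sub_mod A N) (reg_act mult)"
    and z: "z \<in> comp S m" and dz: "gdiff S z = gzero S"
    and e: "e \<in> N 0" and ez: "act 0 e z \<noteq> gzero S"
  shows "\<exists>f. dg_iso A (shift_mod S m) (shift_act S act m) (sub_mod A N) (reg_act mult) f"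
proof -
  have Sm: "dg_module A mult one S act" using Ssim by (simp add: dg_simple_def)
  have CA: "dg_complex A" using alg_dgc[OF Al] .
  have GA: "graded_module A" using dgc_gm[OF CA] .
  have CS: "dg_complex S" using mod_dgc[OF Sm] .
  have GS: "graded_module S" using dgc_gm[OF CS] .
  have NA: "\<And>k'. N k' \<subseteq> comp A k'" using sub_D[OF N] by blast
  have Nadd: "\<And>k b b'. b \<in> N k \<Longrightarrow> b' \<in> N k \<Longrightarrow> gadd A b b' \<in> N k"
    using sub_D[OF N] by blast
  have Nneg: "\<And>k b. b \<in> N k \<Longrightarrow> gneg A b \<in> N k"
    using sub_D[OF N] by blast
  have Nsmul: "\<And>k b r. b \<in> N k \<Longrightarrow> gsmul A r b \<in> N k"
    using sub_D[OF N] by blast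
  have Nact: "\<And>k b i a. b \<in> N k \<Longrightarrow> a \<in> comp A i \<Longrightarrow> mult a b \<in> N (i + k)"
    using sub_D[OF N] by simp
  have Ndiff: "\<And>k b. b \<in> N k \<Longrightarrow> gdiff A b \<in> N (k + 1)"
    using sub_D[OF N] by blast
  define K where "K = (\<lambda>k. {b \<in> N k. act k b z = gzero S})"
  have Ksub: "dg_submodule A (sub_mod A N) (reg_act mult) K"
    unfolding K_def using K_sub[OF Al Sm N z dz] .
  have "(\<forall>k. K k = {gzero (sub_mod A N)}) \<or> (\<forall>k. K k = comp (sub_mod A N) k)"
    using Nsim Ksub unfolding dg_simple_def by blast
  moreover have "K 0 \<noteq> N 0" using e ez unfolding K_def by blast
  ultimately have K0: "\<And>k. K k = {gzero A}" by auto
  have Kz: "\<And>k b. b \<in> N k \<Longrightarrow> act k b z = gzero S \<Longrightarrow> b = gzero A"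
  proof -
    fix k b assume "b \<in> N k" "act k b z = gzero S"
    then have "b \<in> K k" unfolding K_def by blast
    then show "b = gzero A" using K0 by blast
  qed
  define J where "J = (\<lambda>k. (\<lambda>b. act (k - m) b z) ` N (k - m))"
  have Jsub: "dg_submodule A S act J" unfolding J_def using J_sub[OF Al Sm N z dz] .
  have "(\<forall>k. J k = {gzero S}) \<or> (\<forall>k. J k = comp S k)"
    using Ssim Jsub unfolding dg_simple_def by blast
  moreover have "act 0 e z \<in> J m" using e unfolding J_def by simp
  ultimately have Jall: "\<And>k. J k = comp S k" using ez by blast
  have surj0: "\<And>k x. x \<in> comp S (k + m) \<Longrightarrow> \<exists>b\<in>N k. x = act k b z"
  proof -
    fix k x assume "x \<in> comp S (k + m)"
    then have "x \<in> J (k + m)" using Jall by simp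
    then show "\<exists>b\<in>N k. x = act k b z" unfolding J_def by auto
  qed
  define \<phi> where "\<phi> = (\<lambda>k b. gsign S (m * k) (act k b z))"
  have hm: "\<And>k. addmap A k S (k + m) (\<lambda>a. act k a z)" using mod_addmap_a[OF Sm z] .
  have actin: "\<And>k b. b \<in> N k \<Longrightarrow> act k b z \<in> comp S (k + m)"
    using addmap_in[OF hm] NA by blast
  have phin: "\<And>k b. b \<in> N k \<Longrightarrow> \<phi> k b \<in> comp S (k + m)"
    unfolding \<phi>_def using actin gsign_in[OF GS] by blast
  have inj: "\<And>k. inj_on (\<phi> k) (N k)"
  proof (rule inj_onI)
    fix k b b' assume b: "b \<in> N k" and b': "b' \<in> N k" and e: "\<phi> k b = \<phi> k b'"
    have bA: "b \<in> comp A k" and b'A: "b' \<in> comp A k" using b b' NA by blast+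
    have eq: "act k b z = act k b' z"
      using gsign_inj[OF GS actin[OF b] actin[OF b']] e unfolding \<phi>_def by blast
    have "act k (gadd A b (gneg A b')) z = gadd S (act k b z) (act k (gneg A b') z)"
      using addmap_add[OF hm bA gm_neg[OF GA b'A]] .
    also have "\<dots> = gadd S (act k b z) (gneg S (act k b' z))" using hom_neg[OF GA GS hm b'A] by simp
    also have "\<dots> = gzero S" using eq gm_rneg[OF GS actin[OF b']] by simp
    finally have "gadd A b (gneg A b') = gzero A" using Kz Nadd[OF b Nneg[OF b']] by blast
    then show "b = b'" using gm_sub_zero[OF GA bA b'A] by blast
  qed
  have img: "\<And>k. \<phi> k ` N k = comp S (k + m)"
  proof
    fix k show "\<phi> k ` N k \<subseteq> comp S (k + m)" using phin by blast
    show "comp S (k + m) \<subseteq> \<phi> k ` N k"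
    proof
      fix x assume x: "x \<in> comp S (k + m)"
      obtain b where b: "b \<in> N k" "gsign S (m * k) x = act k b z"
        using surj0[OF gsign_in[OF GS x]] by blast
      have "\<phi> k b = gsign S (m * k) (gsign S (m * k) x)" using b unfolding \<phi>_def by simp
      also have "\<dots> = x" using gsign_gsign[OF GS x] gsign_even[of "m * k + m * k"] by simp
      finally show "x \<in> \<phi> k ` N k" using b by (metis image_eqI)
    qed
  qed
  have bij: "\<And>k. bij_betw (\<phi> k) (N k) (comp S (k + m))"
    using inj img unfolding bij_betw_def by blast
  define f where "f = (\<lambda>k. inv_into (N k) (\<phi> k))"
  have fbij: "\<And>k. bij_betw (f k) (comp S (k + m)) (N k)"
    unfolding f_def using bij_betw_inv_into[OF bij] .
  have fN: "\<And>k x. x \<in> comp S (k + m) \<Longrightarrow> f k x \<in> N k"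
    using fbij bij_betwE by blast
  have fphi: "\<And>k x. x \<in> comp S (k + m) \<Longrightarrow> \<phi> k (f k x) = x"
    unfolding f_def using img f_inv_into_f by metis
  have feq: "\<And>k b x. b \<in> N k \<Longrightarrow> \<phi> k b = x \<Longrightarrow> f k x = b"
    unfolding f_def using inj inv_into_f_eq by metis
  have "dg_iso A (shift_mod S m) (shift_act S act m) (sub_mod A N) (reg_act mult) f"
    unfolding dg_iso_def shift_mod_simps sub_mod_simps reg_act_simp
  proof (intro allI conjI ballI)
    fix k
    show "bij_betw (f k) (comp S (k + m)) (N k)" using fbij .
  next
    fix k x y assume x: "x \<in> comp S (k + m)" and y: "y \<in> comp S (k + m)"
    let ?b = "f k x" and ?b' = "f k y"
    have b: "?b \<in> N k" and b': "?b' \<in> N k" using fN x y by blast+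
    have bA: "?b \<in> comp A k" and b'A: "?b' \<in> comp A k" using b b' NA by blast+
    have "\<phi> k (gadd A ?b ?b') = gsign S (m * k) (gadd S (act k ?b z) (act k ?b' z))"
      unfolding \<phi>_def using addmap_add[OF hm bA b'A] by simp
    also have "\<dots> = gadd S (\<phi> k ?b) (\<phi> k ?b')"
      unfolding \<phi>_def using gsign_add[OF GS actin[OF b] actin[OF b']] .
    also have "\<dots> = gadd S x y" using fphi x y by simp
    finally show "f k (gadd S x y) = gadd A (f k x) (f k y)" using feq Nadd[OF b b'] by blast
  next
    fix k r x assume x: "x \<in> comp S (k + m)"
    let ?b = "f k x"
    have b: "?b \<in> N k" using fN x by blast
    have bA: "?b \<in> comp A k" using b NA by blast
    have "\<phi> k (gsmul A r ?b) = gsign S (m * k) (gsmul S r (act k ?b z))"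
      unfolding \<phi>_def using mod_smul[OF Sm bA z] by simp
    also have "\<dots> = gsmul S r (\<phi> k ?b)"
      unfolding \<phi>_def using gsign_hom[OF GS GS gm_smul_addmap[OF GS] actin[OF b]] by simp
    also have "\<dots> = gsmul S r x" using fphi x by simp
    finally show "f k (gsmul S r x) = gsmul A r (f k x)" using feq Nsmul[OF b] by blast
  next
    fix k i a x assume a: "a \<in> comp A i" and x: "x \<in> comp S (k + m)"
    let ?b = "f k x"
    have b: "?b \<in> N k" using fN x by blast
    have bA: "?b \<in> comp A k" using b NA by blast
    have u: "act k ?b z \<in> comp S (k + m)" using actin[OF b] .
    have "shift_act S act m i a x = gsign S (m * i) (act i a (gsign S (m * k) (act k ?b z)))"
      using fphi[OF x] unfolding shift_act_def \<phi>_def by simp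
    also have "\<dots> = gsign S (m * i) (gsign S (m * k) (act i a (act k ?b z)))"
      using gsign_hom[OF GS GS mod_addmap_m[OF Sm a] u] by simp
    also have "\<dots> = gsign S (m * (i + k)) (act (i + k) (mult a ?b) z)"
      using gsign_gsign[OF GS mod_act_in[OF Sm a u]] mod_assoc[OF Sm bA z a]
      by (simp add: distrib_left)
    also have "\<dots> = \<phi> (i + k) (mult a ?b)" unfolding \<phi>_def ..
    finally show "f (i + k) (shift_act S act m i a x) = mult a (f k x)"
      using feq Nact[OF b a] by metis
  next
    fix k x assume x: "x \<in> comp S (k + m)"
    let ?b = "f k x"
    have b: "?b \<in> N k" using fN x by blast
    have bA: "?b \<in> comp A k" using b NA by blast
    have u: "act k ?b z \<in> comp S (k + m)" using actin[OF b] .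
    have z0: "act k ?b (gzero S) = gzero S"
      using hom_zero[OF GS GS mod_addmap_m[OF Sm bA, of m]] .
    have dact: "gdiff S (act k ?b z) = act (k + 1) (gdiff A ?b) z"
    proof -
      have "gdiff S (act k ?b z) = gadd S (act (k + 1) (gdiff A ?b) z) (gsign S k (act k ?b (gdiff S z)))"
        using mod_diff[OF Sm bA z] .
      also have "\<dots> = act (k + 1) (gdiff A ?b) z"
        using dz z0 gsign_zero[OF GS] gm_rzero[OF GS mod_act_in[OF Sm dgc_diff_in[OF CA bA] z]]
        by simp
      finally show ?thesis .
    qed
    have "gsign S m (gdiff S x) = gsign S m (gdiff S (gsign S (m * k) (act k ?b z)))"
      using fphi[OF x] unfolding \<phi>_def by simp
    also have "\<dots> = gsign S m (gsign S (m * k) (gdiff S (act k ?b z)))"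
      using gsign_hom[OF GS GS dgc_addmap[OF CS] u] by simp
    also have "\<dots> = gsign S (m * (k + 1)) (act (k + 1) (gdiff A ?b) z)"
      using gsign_gsign[OF GS dgc_diff_in[OF CS u]] dact by (simp add: distrib_left add.commute)
    also have "\<dots> = \<phi> (k + 1) (gdiff A ?b)" unfolding \<phi>_def ..
    finally show "f (k + 1) (gsign S m (gdiff S x)) = gdiff A (f k x)"
      using feq Ndiff[OF b] by metis
  qed
  then show ?thesis by blast
qed

lemma summand:
  assumes Al: "dg_algebra A mult one"
    and Ns: "\<forall>N\<in>set Ns. dg_submodule A A (reg_act mult) N"
    and dec: "\<forall>k. \<forall>x\<in>comp A k. \<exists>!xs. length xs = length Ns \<and>
            (\<forall>j<length Ns. xs ! j \<in> (Ns ! j) k) \<and> x = gsum_list A xs"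
    and j: "j < length Ns"
  shows "dg_direct_summand A mult (Ns ! j)"
proof -
  have CA: "dg_complex A" using alg_dgc[OF Al] .
  have GA: "graded_module A" using dgc_gm[OF CA] .
  define n where "n = length Ns"
  define D where "D = (\<lambda>k xs. length xs = n \<and> (\<forall>j'<n. xs ! j' \<in> (Ns ! j') k))"
  have NsS: "\<And>j'. j' < n \<Longrightarrow> dg_submodule A A (reg_act mult) (Ns ! j')"
    using Ns unfolding n_def by simp
  have NsA: "\<And>j' k. j' < n \<Longrightarrow> (Ns ! j') k \<subseteq> comp A k"
    using NsS sub_D by blast
  have Ns0: "\<And>j' k. j' < n \<Longrightarrow> gzero A \<in> (Ns ! j') k"
    using NsS sub_D by blast
  have Nsadd: "\<And>j' k x y. j' < n \<Longrightarrow> x \<in> (Ns ! j') k \<Longrightarrow> y \<in> (Ns ! j') k \<Longrightarrow> gadd A x y \<in> (Ns ! j') k"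
    using NsS sub_D by blast
  have jn: "j < n" using j n_def by simp
  have Dset: "\<And>k xs. D k xs \<Longrightarrow> set xs \<subseteq> comp A k"
  proof
    fix k xs x assume "D k xs" "x \<in> set xs"
    then obtain i where "i < n" "x = xs ! i" "xs ! i \<in> (Ns ! i) k" unfolding D_def
      by (metis in_set_conv_nth)
    then show "x \<in> comp A k" using NsA by blast
  qed
  have ex: "\<And>k x. x \<in> comp A k \<Longrightarrow> \<exists>xs. D k xs \<and> x = gsum_list A xs"
    using dec unfolding D_def n_def by blast
  have uniq: "\<And>k xs ys. D k xs \<Longrightarrow> D k ys \<Longrightarrow> gsum_list A xs = gsum_list A ys \<Longrightarrow> xs = ys"
  proof -
    fix k xs ys assume d: "D k xs" "D k ys" "gsum_list A xs = gsum_list A ys"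
    have "gsum_list A xs \<in> comp A k" using gsum_in[OF GA Dset[OF d(1)]] .
    then have "\<exists>!xs'. D k xs' \<and> gsum_list A xs = gsum_list A xs'"
      using dec unfolding D_def n_def by blast
    then show "xs = ys" using d by blast
  qed
  define N' where "N' = (\<lambda>k. {x \<in> comp A k. \<forall>xs. D k xs \<and> x = gsum_list A xs \<longrightarrow> xs ! j = gzero A})"
  have transfer: "h x \<in> N' k'"
    if hm: "addmap A k A k' h" and hN: "\<forall>j'<n. \<forall>y\<in>(Ns ! j') k. h y \<in> (Ns ! j') k'"
      and x: "x \<in> N' k" for h k k' x
  proof -
    have xA: "x \<in> comp A k" using x unfolding N'_def by blast
    obtain xs where xs: "D k xs" "x = gsum_list A xs" using ex[OF xA] by blast
    have xj: "xs ! j = gzero A" using x xs unfolding N'_def by blast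
    have Dy: "D k' (map h xs)" using xs(1) hN unfolding D_def by simp
    have hx: "h x = gsum_list A (map h xs)" using gsum_hom[OF GA GA hm Dset[OF xs(1)]] xs(2) by simp
    have hxA: "h x \<in> comp A k'" using addmap_in[OF hm xA] .
    have "\<forall>zs. D k' zs \<and> h x = gsum_list A zs \<longrightarrow> zs ! j = gzero A"
    proof (intro allI impI)
      fix zs assume zs: "D k' zs \<and> h x = gsum_list A zs"
      then have "zs = map h xs" using uniq[OF _ Dy] hx by metis
      then show "zs ! j = gzero A" using xj jn xs(1) hom_zero[OF GA GA hm] unfolding D_def by simp
    qed
    then show ?thesis using hxA unfolding N'_def by blast
  qed
  have zero': "\<And>k. gzero A \<in> N' k"
  proof -
    fix k
    have D0: "D k (replicate n (gzero A))" unfolding D_def using Ns0 by simp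
    have s0: "gsum_list A (replicate n (gzero A)) = gzero A" using gsum_zeros[OF GA] by simp
    have "\<forall>zs. D k zs \<and> gzero A = gsum_list A zs \<longrightarrow> zs ! j = gzero A"
      using uniq[OF _ D0] s0 jn by (metis nth_replicate)
    then show "gzero A \<in> N' k" using gm_zero[OF GA] unfolding N'_def by blast
  qed
  have add': "\<And>k x y. x \<in> N' k \<Longrightarrow> y \<in> N' k \<Longrightarrow> gadd A x y \<in> N' k"
  proof -
    fix k x y assume x: "x \<in> N' k" and y: "y \<in> N' k"
    have xA: "x \<in> comp A k" and yA: "y \<in> comp A k" using x y unfolding N'_def by blast+
    obtain xs where xs: "D k xs" "x = gsum_list A xs" using ex[OF xA] by blast
    obtain ys where ys: "D k ys" "y = gsum_list A ys" using ex[OF yA] by blast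
    have xj: "xs ! j = gzero A" using x xs unfolding N'_def by blast
    have yj: "ys ! j = gzero A" using y ys unfolding N'_def by blast
    have len: "length xs = length ys" using xs ys unfolding D_def by simp
    let ?zs = "map2 (gadd A) xs ys"
    have Dz: "D k ?zs" using xs(1) ys(1) Nsadd unfolding D_def by simp
    have sz: "gadd A x y = gsum_list A ?zs"
      using gsum_map2[OF GA len Dset[OF xs(1)] Dset[OF ys(1)]] xs ys by simp
    have "\<forall>zs. D k zs \<and> gadd A x y = gsum_list A zs \<longrightarrow> zs ! j = gzero A"
    proof (intro allI impI)
      fix zs assume zs: "D k zs \<and> gadd A x y = gsum_list A zs"
      then have "zs = ?zs" using uniq[OF _ Dz] sz by metis
      then show "zs ! j = gzero A" using xj yj jn xs(1) ys(1) gm_lzero[OF GA gm_zero[OF GA]]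
        unfolding D_def by simp
    qed
    then show "gadd A x y \<in> N' k" using gm_add[OF GA xA yA] unfolding N'_def by blast
  qed
  have N'A: "\<And>k. N' k \<subseteq> comp A k" unfolding N'_def by blast
  have N'sub: "dg_submodule A A (reg_act mult) N'"
    unfolding dg_submodule_def reg_act_simp
  proof (intro allI conjI ballI)
    fix k show "N' k \<subseteq> comp A k" using N'A .
    show "gzero A \<in> N' k" using zero' .
    fix x assume x: "x \<in> N' k"
    show "gneg A x \<in> N' k"
      using transfer[OF gm_neg_addmap[OF GA] _ x] NsS sub_D by blast
  next
    fix k x y assume "x \<in> N' k" "y \<in> N' k" then show "gadd A x y \<in> N' k" using add' by blast
  next
    fix k r x assume x: "x \<in> N' k"
    show "gsmul A r x \<in> N' k"
      using transfer[OF gm_smul_addmap[OF GA] _ x] NsS sub_D by blast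
  next
    fix k i a x assume a: "a \<in> comp A i" and x: "x \<in> N' k"
    have "\<forall>j'<n. \<forall>y\<in>(Ns ! j') k. mult a y \<in> (Ns ! j') (i + k)"
    proof (intro allI impI ballI)
      fix j' y assume jj: "j' < n" and y: "y \<in> (Ns ! j') k"
      show "mult a y \<in> (Ns ! j') (i + k)" using sub_D[OF NsS[OF jj], of k] a y by simp
    qed
    then show "mult a x \<in> N' (i + k)" using transfer[OF alg_addmap[OF Al a] _ x] by blast
  next
    fix k x assume x: "x \<in> N' k"
    show "gdiff A x \<in> N' (k + 1)"
      using transfer[OF dgc_addmap[OF CA] _ x] NsS sub_D by blast
  qed
  have inter: "\<And>k. (Ns ! j) k \<inter> N' k = {gzero A}"
  proof
    fix k show "{gzero A} \<subseteq> (Ns ! j) k \<inter> N' k" using Ns0[OF jn] zero' by blast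
    show "(Ns ! j) k \<inter> N' k \<subseteq> {gzero A}"
    proof
      fix x assume x: "x \<in> (Ns ! j) k \<inter> N' k"
      let ?xs = "(replicate n (gzero A))[j := x]"
      have Dx: "D k ?xs" using x Ns0 jn unfolding D_def by (simp add: nth_list_update)
      have "?xs[j := gzero A] = replicate n (gzero A)" using jn by (simp add: list_update_same_conv)
      then have "gsum_list A ?xs = gadd A x (gsum_list A (replicate n (gzero A)))"
        using gsum_update[OF GA _ Dset[OF Dx], of j] jn by simp
      also have "\<dots> = x" using gsum_zeros[OF GA, of "replicate n (gzero A)"] gm_rzero[OF GA] x N'A
        by auto
      finally have "x = gsum_list A ?xs" by simp
      then have "?xs ! j = gzero A" using x Dx unfolding N'_def by blast
      then show "x \<in> {gzero A}" using jn by simp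
    qed
  qed
  have decomp: "\<And>k x. x \<in> comp A k \<Longrightarrow> \<exists>y\<in>(Ns ! j) k. \<exists>w\<in>N' k. x = gadd A y w"
  proof -
    fix k x assume xA: "x \<in> comp A k"
    obtain xs where xs: "D k xs" "x = gsum_list A xs" using ex[OF xA] by blast
    have y: "xs ! j \<in> (Ns ! j) k" using xs(1) jn unfolding D_def by blast
    let ?ws = "xs[j := gzero A]"
    have Dw: "D k ?ws" using xs(1) Ns0 jn unfolding D_def by (auto simp add: nth_list_update)
    have wA: "gsum_list A ?ws \<in> comp A k" using gsum_in[OF GA Dset[OF Dw]] .
    have "\<forall>zs. D k zs \<and> gsum_list A ?ws = gsum_list A zs \<longrightarrow> zs ! j = gzero A"
    proof (intro allI impI)
      fix zs assume zs: "D k zs \<and> gsum_list A ?ws = gsum_list A zs"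
      then have "zs = ?ws" using uniq[OF _ Dw] by metis
      then show "zs ! j = gzero A" using jn xs(1) unfolding D_def by simp
    qed
    then have w: "gsum_list A ?ws \<in> N' k" using wA unfolding N'_def by blast
    have "x = gadd A (xs ! j) (gsum_list A ?ws)"
      using gsum_update[OF GA _ Dset[OF xs(1)], of j] xs jn unfolding D_def by simp
    then show "\<exists>y\<in>(Ns ! j) k. \<exists>w\<in>N' k. x = gadd A y w" using y w by blast
  qed
  show ?thesis unfolding dg_direct_summand_def
    using NsS[OF jn] N'sub inter decomp by blast
qed

theorem lemma3p6:
  fixes A :: "('r::comm_ring_1, 'a) gmod"
    and mult :: "'a \<Rightarrow> 'a \<Rightarrow> 'a" and one :: 'a
    and S :: "('r, 'm) gmod" and act :: "int \<Rightarrow> 'a \<Rightarrow> 'm \<Rightarrow> 'm"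
  assumes "dg_algebra A mult one"
    and "finite_sum_of_dg_simples A mult one"
    and "dg_simple A mult one S act"
  shows "\<exists>n::int. \<exists>N f. dg_direct_summand A mult N \<and>
           dg_iso A (shift_mod S n) (shift_act S act n) (sub_mod A N) (reg_act mult) f"
proof -
  note Al = assms(1) and Ssim = assms(3)
  have Sm: "dg_module A mult one S act" using Ssim by (simp add: dg_simple_def)
  have CA: "dg_complex A" using alg_dgc[OF Al] .
  have GA: "graded_module A" using dgc_gm[OF CA] .
  have CS: "dg_complex S" using mod_dgc[OF Sm] .
  have GS: "graded_module S" using dgc_gm[OF CS] .
  obtain Ns :: "(int \<Rightarrow> 'a set) list" where
    Ns: "\<forall>N\<in>set Ns. dg_submodule A A (reg_act mult) N \<and>
                   dg_simple A mult one (sub_mod A N) (reg_act mult)"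
    and dec: "\<forall>k. \<forall>x\<in>comp A k. \<exists>!xs. length xs = length Ns \<and>
            (\<forall>j<length Ns. xs ! j \<in> (Ns ! j) k) \<and> x = gsum_list A xs"
    using assms(2) unfolding finite_sum_of_dg_simples_def by blast
  obtain m z where z: "z \<in> comp S m" "z \<noteq> gzero S" "gdiff S z = gzero S"
    using cycle_exists[OF Ssim] by blast
  obtain es where es: "length es = length Ns" "\<forall>j<length Ns. es ! j \<in> (Ns ! j) 0"
    "one = gsum_list A es"
    using dec alg_one[OF Al] by blast
  have esA: "set es \<subseteq> comp A 0"
  proof
    fix x assume "x \<in> set es"
    then obtain i where i: "i < length es" "x = es ! i" by (metis in_set_conv_nth)
    have "Ns ! i \<in> set Ns" using i es(1) by simp
    then have "dg_submodule A A (reg_act mult) (Ns ! i)" using Ns by blast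
    then have "(Ns ! i) 0 \<subseteq> comp A 0" using sub_D by blast
    then show "x \<in> comp A 0" using es(2) i es(1) by auto
  qed
  have "z = act 0 one z" using mod_one[OF Sm z(1)] by simp
  also have "\<dots> = gsum_list S (map (\<lambda>a. act 0 a z) es)"
    using gsum_hom[OF GA GS mod_addmap_a[OF Sm z(1), of 0] esA] es(3) by simp
  finally have zsum: "z = gsum_list S (map (\<lambda>a. act 0 a z) es)" .
  have "\<exists>j<length Ns. act 0 (es ! j) z \<noteq> gzero S"
  proof (rule ccontr)
    assume "\<not> ?thesis"
    then have "\<forall>y\<in>set (map (\<lambda>a. act 0 a z) es). y = gzero S"
      using es(1) by (auto simp: in_set_conv_nth)
    then have "z = gzero S" using zsum gsum_zeros[OF GS] by metis
    then show False using z(2) by simp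
  qed
  then obtain j where j: "j < length Ns" "act 0 (es ! j) z \<noteq> gzero S" by blast
  have NjS: "Ns ! j \<in> set Ns" using j by simp
  have Nsub: "dg_submodule A A (reg_act mult) (Ns ! j)" using Ns NjS by blast
  have Nsim: "dg_simple A mult one (sub_mod A (Ns ! j)) (reg_act mult)" using Ns NjS by blast
  obtain f where f: "dg_iso A (shift_mod S m) (shift_act S act m) (sub_mod A (Ns ! j)) (reg_act mult) f"
    using iso_exists[OF Al Ssim Nsub Nsim z(1) z(3) _ j(2)] es(2) j(1) by blast
  have "dg_direct_summand A mult (Ns ! j)"
    using summand[OF Al _ dec j(1)] Ns by blast
  then show ?thesis using f by blast
qed

end
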